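(* For any values of $k$ and $\mu$, \[ \,_{2}F_{3}\left(\tfrac{\mu}{2}+\tfrac{1}{4},\tfrac{\mu}{2}+\tfrac{3}{4};1,\mu+\tfrac{1}{2},\mu+1;-k^{2}\right)=\sqrt{\pi}\,\Gamma(\mu+1)\sum_{L=0}^{\infty}\frac{(-1)^{2L}2^{-6L}k^{2L}\Gamma(2L+1)\left(2-\delta_{L0}\right)}{(L!)^{2}\Gamma\left(L+\frac{1}{2}\right)\Gamma(L+\mu+1)} J_{2L}(k)\,_{1}F_{2}\left(L+\tfrac{1}{2};2L+1,L+\mu+1;-\tfrac{k^{2}}{4}\right). \]
   Context: $\,_{p}F_{q}(a_1,\dots,a_p;b_1,\dots,b_q;z)=\sum_{n\ge0}\frac{(a_1)_n\cdots(a_p)_n}{(b_1)_n\cdots(b_q)_n}\frac{z^n}{n!}$ is the generalized hypergeometric function, with $(c)_n=\Gamma(c+n)/\Gamma(c)$. $J_n$ is the Bessel function of the first kind. $\delta_{L0}$ is the Kronecker delta. *)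

theory Defs
  imports "HOL-Analysis.Analysis"
begin

definition hyperF :: "complex list \<Rightarrow> complex list \<Rightarrow> complex \<Rightarrow> complex" where
  "hyperF as bs z =
     (\<Sum>n. (prod_list (map (\<lambda>a. pochhammer a n) as) / prod_list (map (\<lambda>b. pochhammer b n) bs))
            * z ^ n / fact n)"

definition besselJ :: "nat \<Rightarrow> complex \<Rightarrow> complex" where
  "besselJ n z = (\<Sum>m. (-1) ^ m / (fact m * fact (m + n)) * (z / 2) ^ (2 * m + n))"

end

theory Submission
  imports Defs "HOL-Computational_Algebra.Formal_Power_Series"
begin

lemma I1_A:
  fixes p q :: nat
  shows "(\<Sum>i\<le>p. ((2*p) choose i) * ((2*q) choose (p+q-i))) =
         (\<Sum>L\<le>min p q. ((2*p) choose (p-L)) * ((2*q) choose (q-L)))"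
proof -
  have "(\<Sum>i\<le>p. ((2*p) choose i) * ((2*q) choose (p+q-i))) =
        (\<Sum>L\<le>p. ((2*p) choose (p-L)) * ((2*q) choose (q+L)))"
    by (rule sum.reindex_bij_witness[of _ "\<lambda>L. p - L" "\<lambda>i. p - i"]) (auto simp: add.commute[of q p])
  also have "\<dots> = (\<Sum>L\<le>min p q. ((2*p) choose (p-L)) * ((2*q) choose (q+L)))"
    by (rule sum.mono_neutral_right) auto
  also have "\<dots> = (\<Sum>L\<le>min p q. ((2*p) choose (p-L)) * ((2*q) choose (q-L)))"
  proof (rule sum.cong)
    fix L assume "L \<in> {..min p q}"
    then have "(2*q) choose (q+L) = (2*q) choose (2*q - (q+L))"
      by (intro binomial_symmetric) auto
    also have "2*q - (q+L) = q - L" by simp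
    finally show "((2*p) choose (p-L)) * ((2*q) choose (q+L)) = ((2*p) choose (p-L)) * ((2*q) choose (q-L))" by simp
  qed simp
  finally show ?thesis .
qed

lemma I1_B:
  fixes p q :: nat
  shows "(\<Sum>i\<in>{p<..p+q}. ((2*p) choose i) * ((2*q) choose (p+q-i))) =
         (\<Sum>L\<in>{1..min p q}. ((2*p) choose (p-L)) * ((2*q) choose (q-L)))"
proof -
  have "(\<Sum>i\<in>{p<..p+q}. ((2*p) choose i) * ((2*q) choose (p+q-i))) =
        (\<Sum>L\<in>{1..q}. ((2*p) choose (p+L)) * ((2*q) choose (q-L)))"
    by (rule sum.reindex_bij_witness[of _ "\<lambda>L. p + L" "\<lambda>i. i - p"]) (auto simp: add.commute[of q p])
  also have "\<dots> = (\<Sum>L\<in>{1..min p q}. ((2*p) choose (p+L)) * ((2*q) choose (q-L)))"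
    by (rule sum.mono_neutral_right) auto
  also have "\<dots> = (\<Sum>L\<in>{1..min p q}. ((2*p) choose (p-L)) * ((2*q) choose (q-L)))"
  proof (rule sum.cong)
    fix L assume "L \<in> {1..min p q}"
    then have "(2*p) choose (p+L) = (2*p) choose (2*p - (p+L))"
      by (intro binomial_symmetric) auto
    also have "2*p - (p+L) = p - L" by simp
    finally show "((2*p) choose (p+L)) * ((2*q) choose (q-L)) = ((2*p) choose (p-L)) * ((2*q) choose (q-L))" by simp
  qed simp
  finally show ?thesis .
qed

lemma I1:
  fixes p q :: nat
  shows "(\<Sum>L\<le>min p q. (if L = 0 then 1 else 2) * ((2*p) choose (p-L)) * ((2*q) choose (q-L)))
         = (2*(p+q)) choose (p+q)"
proof -
  define f where "f L = ((2*p) choose (p-L)) * ((2*q) choose (q-L))" for L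
  have split: "{..p+q} = {..p} \<union> {p<..p+q}" by auto
  have "(2*(p+q)) choose (p+q) = (\<Sum>i\<le>p+q. ((2*p) choose i) * ((2*q) choose (p+q-i)))"
    using vandermonde[of "2*p" "2*q" "p+q"] by simp
  also have "\<dots> = (\<Sum>i\<le>p. ((2*p) choose i) * ((2*q) choose (p+q-i))) +
       (\<Sum>i\<in>{p<..p+q}. ((2*p) choose i) * ((2*q) choose (p+q-i)))"
    unfolding split by (rule sum.union_disjoint) auto
  also have "\<dots> = (\<Sum>L\<le>min p q. f L) + (\<Sum>L\<in>{1..min p q}. f L)"
    unfolding I1_A I1_B f_def ..
  finally have V: "(2*(p+q)) choose (p+q) = (\<Sum>L\<le>min p q. f L) + (\<Sum>L\<in>{1..min p q}. f L)" .
  have ins: "{..min p q} = insert 0 {1..min p q}" by auto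
  have "(\<Sum>L\<le>min p q. (if L = 0 then 1 else 2) * ((2*p) choose (p-L)) * ((2*q) choose (q-L)))
     = (\<Sum>L\<le>min p q. (if L = 0 then 1 else 2) * f L)" by (simp add: f_def mult.assoc)
  also have "\<dots> = f 0 + (\<Sum>L\<in>{1..min p q}. 2 * f L)"
  proof -
    have "(\<Sum>L\<in>{1..min p q}. (if L = 0 then 1 else 2) * f L) = (\<Sum>L\<in>{1..min p q}. 2 * f L)"
      by (rule sum.cong) auto
    moreover have "(\<Sum>L\<le>min p q. (if L = 0 then 1 else 2) * f L) = f 0 + (\<Sum>L\<in>{1..min p q}. (if L = 0 then 1 else 2) * f L)"
      unfolding ins by (subst sum.insert) auto
    ultimately show ?thesis by simp
  qed
  also have "\<dots> = (2*(p+q)) choose (p+q)"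
  proof -
    have "(\<Sum>L\<le>min p q. f L) = f 0 + (\<Sum>L\<in>{1..min p q}. f L)"
      unfolding ins by (subst sum.insert) auto
    then show ?thesis unfolding V by (simp add: sum_distrib_left[symmetric])
  qed
  finally show ?thesis .
qed

lemma I2_V:
  fixes x :: complex
  shows "(\<Sum>q\<le>N. of_nat (N choose q) * pochhammer (of_nat N - of_nat q + 1/2) q * pochhammer (x + of_nat q) (N-q))
       = pochhammer (x + of_nat N - 1/2) N"
proof -
  define a :: complex where "a = of_nat N - 1/2"
  define b :: complex where "b = x + of_nat N - 1"
  have V: "(\<Sum>k\<in>{0..N}. (a gchoose k) * (b gchoose (N - k))) = (a + b) gchoose N"
    by (rule gbinomial_Vandermonde)
  have "pochhammer (x + of_nat N - 1/2) N = fact N * ((a + b) gchoose N)"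
    by (simp add: gbinomial_pochhammer' a_def b_def algebra_simps)
  also have "\<dots> = (\<Sum>k\<in>{0..N}. fact N * ((a gchoose k) * (b gchoose (N - k))))"
    by (simp add: V[symmetric] sum_distrib_left)
  also have "\<dots> = (\<Sum>q\<le>N. of_nat (N choose q) * pochhammer (of_nat N - of_nat q + 1/2) q * pochhammer (x + of_nat q) (N-q))"
  proof (rule sum.cong)
    fix q assume q: "q \<in> {..N}"
    then have qN: "q \<le> N" by simp
    have e1: "a gchoose q = pochhammer (of_nat N - of_nat q + 1/2) q / fact q"
      by (simp add: gbinomial_pochhammer' a_def algebra_simps)
    have e2: "b gchoose (N - q) = pochhammer (x + of_nat q) (N - q) / fact (N - q)"
      using qN by (simp add: gbinomial_pochhammer' b_def algebra_simps of_nat_diff)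
    have e3: "(of_nat (N choose q) :: complex) = fact N / (fact q * fact (N - q))"
      using qN by (rule binomial_fact)
    show "fact N * ((a gchoose q) * (b gchoose (N - q))) =
          of_nat (N choose q) * pochhammer (of_nat N - of_nat q + 1/2) q * pochhammer (x + of_nat q) (N-q)"
      unfolding e1 e2 e3 by (simp add: field_simps)
  qed auto
  finally show ?thesis ..
qed

lemma I2_C:
  assumes "q \<le> N"
  shows "(of_nat ((2*N) choose (2*q)) :: complex) * pochhammer (1/2) q
       = of_nat (N choose q) * pochhammer (of_nat N - of_nat q + 1/2) q"
proof -
  have e1: "(of_nat ((2*N) choose (2*q)) :: complex) = fact (2*N) / (fact (2*q) * fact (2*N - 2*q))"
    using assms by (intro binomial_fact) simp
  have e2: "(of_nat (N choose q) :: complex) = fact N / (fact q * fact (N - q))"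
    using assms by (rule binomial_fact)
  have d: "2*N - 2*q = 2*(N-q)" by simp
  have p: "pochhammer (1/2::complex) N = pochhammer (1/2) (N-q) * pochhammer (1/2 + of_nat (N-q)) q"
    using pochhammer_product[of "N-q" N "1/2::complex"] assms by simp
  have p2: "(1/2 + of_nat (N-q) :: complex) = of_nat N - of_nat q + 1/2"
    using assms by (simp add: of_nat_diff)
  have nz1: "pochhammer (1/2::complex) n \<noteq> 0" for n
  proof
    assume "pochhammer (1/2::complex) n = 0"
    then obtain k where eq: "(1/2::complex) = - of_nat k" by (auto simp: pochhammer_eq_0_iff)
    have "Re (1/2::complex) = Re (- of_nat k)" using eq by (rule arg_cong)
    then have "(1/2::real) = - real k" by simp
    then show False by linarith
  qed
  have pw: "(2::complex)^(N*2) = 2^(q*2) * 2^((N-q)*2)"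
    using assms by (simp add: power_add[symmetric] algebra_simps)
  show ?thesis
    unfolding e1 e2 d fact_double p2[symmetric] p using nz1
    by (simp add: field_simps power_mult_distrib pw)
qed

lemma I2:
  fixes x :: complex
  assumes nz: "pochhammer x N \<noteq> 0"
  shows "(\<Sum>q\<le>N. of_nat ((2*N) choose (2*q)) * pochhammer (1/2) q / pochhammer x q)
       = pochhammer (x + of_nat N - 1/2) N / pochhammer x N"
proof -
  have "(\<Sum>q\<le>N. of_nat ((2*N) choose (2*q)) * pochhammer (1/2) q / pochhammer x q) * pochhammer x N
      = (\<Sum>q\<le>N. of_nat (N choose q) * pochhammer (of_nat N - of_nat q + 1/2) q * pochhammer (x + of_nat q) (N-q))"
    unfolding sum_distrib_right
  proof (rule sum.cong)
    fix q assume "q \<in> {..N}"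
    then have qN: "q \<le> N" by simp
    have pp: "pochhammer x N = pochhammer x q * pochhammer (x + of_nat q) (N-q)"
      using pochhammer_product[OF qN] .
    have nzq: "pochhammer x q \<noteq> 0" using nz pp by auto
    show "of_nat ((2*N) choose (2*q)) * pochhammer (1/2) q / pochhammer x q * pochhammer x N =
          of_nat (N choose q) * pochhammer (of_nat N - of_nat q + 1/2) q * pochhammer (x + of_nat q) (N-q)"
      unfolding pp using nzq I2_C[OF qN] by (simp add: field_simps)
  qed simp
  also have "\<dots> = pochhammer (x + of_nat N - 1/2) N" by (rule I2_V)
  finally show ?thesis using nz by (simp add: field_simps)
qed

definition eps :: "nat \<Rightarrow> complex" where "eps L = (if L = 0 then 1 else 2)"

lemma I1c:
  fixes p q :: nat
  shows "(\<Sum>L\<le>min p q. eps L / (fact (p-L) * fact (p+L) * fact (q-L) * fact (q+L)))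
       = fact (2*(p+q)) / (fact (2*p) * fact (2*q) * fact (p+q) ^ 2)"
proof -
  have "(of_nat ((2*(p+q)) choose (p+q)) :: complex) =
        of_nat (\<Sum>L\<le>min p q. (if L = 0 then 1 else 2) * ((2*p) choose (p-L)) * ((2*q) choose (q-L)))"
    by (simp only: I1)
  also have "\<dots> = (\<Sum>L\<le>min p q. eps L * (fact (2*p) / (fact (p-L) * fact (p+L))) * (fact (2*q) / (fact (q-L) * fact (q+L))))"
    unfolding of_nat_sum
  proof (rule sum.cong)
    fix L assume "L \<in> {..min p q}"
    then have Lp: "L \<le> p" and Lq: "L \<le> q" by auto
    have b1: "(of_nat ((2*p) choose (p-L)) :: complex) = fact (2*p) / (fact (p-L) * fact (2*p - (p-L)))"
      by (rule binomial_fact) simp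
    have b2: "(of_nat ((2*q) choose (q-L)) :: complex) = fact (2*q) / (fact (q-L) * fact (2*q - (q-L)))"
      by (rule binomial_fact) simp
    have e1: "2*p - (p-L) = p + L" using Lp by simp
    have e2: "2*q - (q-L) = q + L" using Lq by simp
    show "of_nat ((if L = 0 then 1 else 2) * ((2*p) choose (p-L)) * ((2*q) choose (q-L))) =
       eps L * (fact (2*p) / (fact (p-L) * fact (p+L))) * (fact (2*q) / (fact (q-L) * fact (q+L)))"
      unfolding of_nat_mult b1 b2 e1 e2 by (simp add: eps_def)
  qed simp
  also have "\<dots> = fact (2*p) * fact (2*q) * (\<Sum>L\<le>min p q. eps L / (fact (p-L) * fact (p+L) * fact (q-L) * fact (q+L)))"
    unfolding sum_distrib_left by (rule sum.cong) (simp_all add: field_simps)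
  finally have X: "(of_nat ((2*(p+q)) choose (p+q)) :: complex) = fact (2*p) * fact (2*q) * (\<Sum>L\<le>min p q. eps L / (fact (p-L) * fact (p+L) * fact (q-L) * fact (q+L)))" .
  have Y: "(of_nat ((2*(p+q)) choose (p+q)) :: complex) = fact (2*(p+q)) / (fact (p+q) * fact (2*(p+q) - (p+q)))"
    by (rule binomial_fact) simp
  have Z: "2*(p+q) - (p+q) = p+q" by simp
  show ?thesis using X unfolding Y Z by (simp add: field_simps power2_eq_square)
qed

definition aa :: "complex \<Rightarrow> nat \<Rightarrow> nat \<Rightarrow> complex" where
  "aa k L j = (-1) ^ j / (fact j * fact (j + 2*L)) * (k / 2) ^ (2*j + 2*L)"
definition PP :: "complex \<Rightarrow> nat \<Rightarrow> complex" where
  "PP \<mu> q = pochhammer (1/2) q / pochhammer (\<mu> + 1) q"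
definition bb :: "complex \<Rightarrow> complex \<Rightarrow> nat \<Rightarrow> nat \<Rightarrow> complex" where
  "bb k \<mu> L m = (-1) ^ m * (k / 2) ^ (2*m + 2*L) * PP \<mu> (L + m) / (fact m * fact (m + 2*L))"
definition cc :: "complex \<Rightarrow> complex \<Rightarrow> nat \<Rightarrow> nat \<Rightarrow> complex" where
  "cc k \<mu> L n = (\<Sum>i\<le>n. aa k L i * bb k \<mu> L (n - i))"
definition tt :: "complex \<Rightarrow> complex \<Rightarrow> nat \<times> nat \<Rightarrow> complex" where
  "tt k \<mu> x = eps (fst x) * cc k \<mu> (fst x) (snd x)"
definition lhsT :: "complex \<Rightarrow> complex \<Rightarrow> nat \<Rightarrow> complex" where
  "lhsT k \<mu> N = (prod_list (map (\<lambda>a. pochhammer a N) [\<mu>/2 + 1/4, \<mu>/2 + 3/4]) /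
      prod_list (map (\<lambda>b. pochhammer b N) [1, \<mu> + 1/2, \<mu> + 1])) * (- (k ^ 2)) ^ N / fact N"

definition GG :: "complex \<Rightarrow> complex \<Rightarrow> nat \<Rightarrow> nat \<Rightarrow> nat \<Rightarrow> complex" where
  "GG k \<mu> N p L = (-1) ^ N * (k/2) ^ (2*N) * PP \<mu> (N - p) /
      (fact (p - L) * fact (p + L) * fact (N - p - L) * fact (N - p + L))"

lemma ab_term:
  "aa k L i * bb k \<mu> L m = GG k \<mu> (2*L + i + m) (L + i) L"
proof -
  have e1: "2*L + i + m - (L + i) = L + m" by simp
  have e2: "L + i - L = i" by simp
  have e3: "2*L + i + m - (L+i) - L = m" by simp
  have e4: "2*L + i + m - (L+i) + L = m + 2*L" by simp
  have e5: "L + i + L = i + 2*L" by simp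
  have e6: "L + m + L = m + 2*L" by simp
  have e7: "L + m - L = m" by simp
  have pw: "(k/2) ^ (2*(2*L+i+m)) = (k/2) ^ (2*i + 2*L) * (k/2) ^ (2*m + 2*L)"
    by (simp add: power_add[symmetric] algebra_simps)
  have sg: "(-1::complex) ^ (2*L+i+m) = (-1) ^ i * (-1) ^ m"
    by (simp add: power_add power_mult)
  show ?thesis
    unfolding aa_def bb_def GG_def e1 e2 e3 e4 e5 e6 e7 pw sg
    by (simp add: field_simps add.commute[of i "2*L"])
qed

lemma pochhammer_nz: "z \<notin> \<int>\<^sub>\<le>\<^sub>0 \<Longrightarrow> pochhammer (z::complex) n \<noteq> 0"
  using pochhammer_eq_0_imp_nonpos_Int by blast

lemma finite_identity:
  fixes k \<mu> :: complex
  assumes a1: "\<mu> + 1/2 \<notin> \<int>\<^sub>\<le>\<^sub>0" and a2: "\<mu> + 1 \<notin> \<int>\<^sub>\<le>\<^sub>0"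
  shows "(\<Sum>L\<le>N div 2. tt k \<mu> (L, N - 2*L)) = lhsT k \<mu> N"
proof -
  have "(\<Sum>L\<le>N div 2. tt k \<mu> (L, N - 2*L)) =
        (\<Sum>L\<le>N div 2. \<Sum>i\<le>N - 2*L. eps L * (aa k L i * bb k \<mu> L (N - 2*L - i)))"
    by (simp add: tt_def cc_def sum_distrib_left)
  also have "\<dots> = (\<Sum>(L,i)\<in>Sigma {..N div 2} (\<lambda>L. {..N - 2*L}). eps L * (aa k L i * bb k \<mu> L (N - 2*L - i)))"
    by (rule sum.Sigma) auto
  also have "\<dots> = (\<Sum>(p,L)\<in>Sigma {..N} (\<lambda>p. {..min p (N-p)}). eps L * GG k \<mu> N p L)"
  proof (rule sum.reindex_bij_witness[of _ "\<lambda>(p,L). (L, p - L)" "\<lambda>(L,i). (L + i, L)"])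
    fix x assume x: "x \<in> Sigma {..N} (\<lambda>p. {..min p (N-p)})"
    obtain p L where "x = (p,L)" by force
    with x show "(case (case x of (p, L) \<Rightarrow> (L, p - L)) of (L, i) \<Rightarrow> (L + i, L)) = x" by auto
    from x \<open>x = (p,L)\<close> show "(case x of (p, L) \<Rightarrow> (L, p - L)) \<in> Sigma {..N div 2} (\<lambda>L. {..N - 2*L})"
      by auto
  next
    fix y assume y: "y \<in> Sigma {..N div 2} (\<lambda>L. {..N - 2*L})"
    obtain L i where yy: "y = (L,i)" by force
    with y show "(case (case y of (L, i) \<Rightarrow> (L + i, L)) of (p, L) \<Rightarrow> (L, p - L)) = y" by auto
    from y yy show "(case y of (L, i) \<Rightarrow> (L + i, L)) \<in> Sigma {..N} (\<lambda>p. {..min p (N-p)})"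
      by auto
    from y yy have LN: "2*L + i \<le> N" by auto
    then obtain m where m: "N = 2*L + i + m" by (metis le_add_diff_inverse)
    have "N - 2*L - i = m" using m by simp
    then show "(case (case y of (L, i) \<Rightarrow> (L + i, L)) of (p, L) \<Rightarrow> eps L * GG k \<mu> N p L) =
               (case y of (L, i) \<Rightarrow> eps L * (aa k L i * bb k \<mu> L (N - 2*L - i)))"
      unfolding yy using ab_term[of k L i \<mu> m] m by simp
  qed
  also have "\<dots> = (\<Sum>p\<le>N. \<Sum>L\<le>min p (N-p). eps L * GG k \<mu> N p L)"
    by (rule sum.Sigma[symmetric]) auto
  also have "\<dots> = (\<Sum>p\<le>N. (-1) ^ N * (k/2) ^ (2*N) * PP \<mu> (N - p) *
                      (fact (2*N) / (fact (2*p) * fact (2*(N-p)) * fact N ^ 2)))"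
  proof (rule sum.cong)
    fix p assume "p \<in> {..N}"
    then have pN: "p \<le> N" by simp
    have "(\<Sum>L\<le>min p (N-p). eps L * GG k \<mu> N p L) =
          (-1) ^ N * (k/2) ^ (2*N) * PP \<mu> (N - p) *
          (\<Sum>L\<le>min p (N-p). eps L / (fact (p-L) * fact (p+L) * fact (N-p-L) * fact (N-p+L)))"
      unfolding sum_distrib_left by (rule sum.cong) (simp_all add: GG_def)
    also have "\<dots> = (-1) ^ N * (k/2) ^ (2*N) * PP \<mu> (N - p) *
                      (fact (2*N) / (fact (2*p) * fact (2*(N-p)) * fact N ^ 2))"
      using I1c[of p "N-p"] pN by simp
    finally show "(\<Sum>L\<le>min p (N-p). eps L * GG k \<mu> N p L) = \<dots>" .
  qed simp
  also have "\<dots> = (\<Sum>q\<le>N. (-1) ^ N * (k/2) ^ (2*N) * PP \<mu> q *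
                      (fact (2*N) / (fact (2*q) * fact (2*N-2*q) * fact N ^ 2)))"
  proof (rule sum.reindex_bij_witness[of _ "\<lambda>q. N - q" "\<lambda>p. N - p"])
    fix a assume "a \<in> {..N}"
    then have aN: "a \<le> N" by simp
    then have e: "2*N - 2*(N-a) = 2*a" "N - (N - a) = a" by auto
    show "(-1) ^ N * (k/2) ^ (2*N) * PP \<mu> (N - a) *
          (fact (2*N) / (fact (2*(N - a)) * fact (2*N-2*(N - a)) * fact N ^ 2)) =
          (-1) ^ N * (k/2) ^ (2*N) * PP \<mu> (N - a) * (fact (2*N) / (fact (2*a) * fact (2*(N-a)) * fact N ^ 2))"
      unfolding e by (simp add: mult.commute)
  qed auto
  also have "\<dots> = (-1) ^ N * (k/2) ^ (2*N) / fact N ^ 2 *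
                 (\<Sum>q\<le>N. of_nat ((2*N) choose (2*q)) * pochhammer (1/2) q / pochhammer (\<mu>+1) q)"
    unfolding sum_distrib_left
  proof (rule sum.cong)
    fix q assume "q \<in> {..N}"
    then have "2*q \<le> 2*N" by simp
    then have bf: "(of_nat ((2*N) choose (2*q)) :: complex) = fact (2*N) / (fact (2*q) * fact (2*N - 2*q))"
      by (rule binomial_fact)
    then show "(-1) ^ N * (k/2) ^ (2*N) * PP \<mu> q * (fact (2*N) / (fact (2*q) * fact (2*N-2*q) * fact N ^ 2)) =
       (-1) ^ N * (k/2) ^ (2*N) / fact N ^ 2 * (of_nat ((2*N) choose (2*q)) * pochhammer (1/2) q / pochhammer (\<mu>+1) q)"
      unfolding bf PP_def by (simp add: field_simps)
  qed simp
  also have "\<dots> = (-1) ^ N * (k/2) ^ (2*N) / fact N ^ 2 *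
                 (pochhammer (\<mu> + 1 + of_nat N - 1/2) N / pochhammer (\<mu>+1) N)"
    using I2[of "\<mu>+1" N] pochhammer_nz[OF a2] by simp
  also have "\<dots> = lhsT k \<mu> N"
  proof -
    have d: "pochhammer (\<mu> + 1/2) (2*N) = of_nat (2^(2*N)) * pochhammer (\<mu>/2 + 1/4) N * pochhammer (\<mu>/2 + 3/4) N"
    proof -
      have e: "2*(\<mu>/2 + 1/4) = \<mu> + 1/2" "\<mu>/2 + 1/4 + 1/2 = \<mu>/2 + 3/4" by simp_all
      show ?thesis using pochhammer_double[of "\<mu>/2 + 1/4" N] unfolding e .
    qed
    have pr: "pochhammer (\<mu> + 1/2) (2*N) = pochhammer (\<mu> + 1/2) N * pochhammer (\<mu> + 1 + of_nat N - 1/2) N"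
    proof -
      have e: "N + N = 2*N" "\<mu> + 1/2 + of_nat N = \<mu> + 1 + of_nat N - 1/2" by simp_all
      show ?thesis using pochhammer_product'[of "\<mu> + 1/2" N N] unfolding e .
    qed
    have nz1: "pochhammer (\<mu> + 1/2) N \<noteq> 0" by (rule pochhammer_nz[OF a1])
    have nz2: "pochhammer (\<mu> + 1) N \<noteq> 0" by (rule pochhammer_nz[OF a2])
    have kk: "(- (k^2)) ^ N = (-1) ^ N * 2 ^ (2*N) * (k/2) ^ (2*N)"
          proof -
      have "(- (k^2)) ^ N = (-1) ^ N * (k^2) ^ N" by (rule power_minus)
      also have "(k^2) ^ N = k ^ (2*N)" by (simp add: power_mult)
      also have "k ^ (2*N) = 2 ^ (2*N) * (k/2) ^ (2*N)" by (simp add: power_divide)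
      finally show ?thesis by simp
    qed
    have "pochhammer (\<mu> + 1 + of_nat N - 1/2) N = of_nat (2^(2*N)) * pochhammer (\<mu>/2 + 1/4) N * pochhammer (\<mu>/2 + 3/4) N / pochhammer (\<mu> + 1/2) N"
      using d pr nz1 by (simp add: field_simps)
    then show ?thesis
      unfolding lhsT_def kk using nz1 nz2 by (simp add: pochhammer_fact[symmetric] field_simps power2_eq_square)
  qed
  finally show ?thesis .
qed

lemma PP_bound:
  fixes \<mu> :: complex
  assumes a2: "\<mu> + 1 \<notin> \<int>\<^sub>\<le>\<^sub>0"
  shows "\<exists>D\<ge>0. \<forall>q. norm (PP \<mu> q) \<le> D * 2 ^ q"
proof -
  define i0 where "i0 = nat \<lceil>2 * norm \<mu> + 2\<rceil>"
  define D where "D = (\<Sum>q\<le>i0. norm (PP \<mu> q))"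
  have D0: "D \<ge> 0" unfolding D_def by (intro sum_nonneg) auto
  have "norm (PP \<mu> q) \<le> D * 2 ^ q" for q
  proof (induction q)
    case 0
    have "norm (PP \<mu> 0) \<le> D" unfolding D_def
      by (rule member_le_sum[of 0 "{..i0}" "\<lambda>q. norm (PP \<mu> q)"]) auto
    then show ?case by simp
  next
    case (Suc q)
    show ?case
    proof (cases "Suc q \<le> i0")
      case True
      have "norm (PP \<mu> (Suc q)) \<le> D" unfolding D_def
        by (rule member_le_sum[of "Suc q" "{..i0}" "\<lambda>q. norm (PP \<mu> q)"]) (use True in auto)
      also have "D \<le> D * 2 ^ Suc q"
      proof -
        have "(1::real) \<le> 2 ^ Suc q" by (rule one_le_power) simp
        then show ?thesis using D0 by (metis mult_le_cancel_left1 mult.commute mult_1 mult_left_mono)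
      qed
      finally show ?thesis .
    next
      case False
      then have qi: "q \<ge> i0" by simp
      then have qmu: "real q \<ge> 2 * norm \<mu> + 2" unfolding i0_def by linarith
      have nz: "\<mu> + 1 + of_nat q \<noteq> 0"
      proof
        assume "\<mu> + 1 + of_nat q = 0"
        then have "\<mu> + 1 = - of_nat q" by (metis add.commute add_eq_0_iff2 add.assoc)
        then have "\<mu> + 1 \<in> \<int>\<^sub>\<le>\<^sub>0" by simp
        with a2 show False by simp
      qed
      have step: "PP \<mu> (Suc q) = PP \<mu> q * ((1/2 + of_nat q) / (\<mu> + 1 + of_nat q))"
        unfolding PP_def pochhammer_Suc using nz by (simp add: field_simps)
      have lb: "norm (\<mu> + 1 + of_nat q) \<ge> real q + 1 - norm \<mu>"
      proof -
        have "norm (of_nat q + 1 :: complex) \<le> norm (\<mu> + 1 + of_nat q) + norm \<mu>"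
          using norm_triangle_ineq4[of "\<mu> + 1 + of_nat q" \<mu>] by (simp add: algebra_simps)
        moreover have "norm (of_nat q + 1 :: complex) = real q + 1"
          by (metis norm_of_nat of_nat_Suc add.commute)
        ultimately show ?thesis by simp
      qed
      have n12: "norm (1/2 + of_nat q :: complex) = real q + 1/2"
      proof -
        have "(1/2 + of_nat q :: complex) = of_real (real q + 1/2)" by simp
        then show ?thesis by (simp only: norm_of_real)
      qed
      have ratio: "norm ((1/2 + of_nat q) / (\<mu> + 1 + of_nat q)) \<le> 2"
        unfolding norm_divide n12 using lb qmu nz
        by (simp add: divide_le_eq)
      have "norm (PP \<mu> (Suc q)) = norm (PP \<mu> q) * norm ((1/2 + of_nat q) / (\<mu> + 1 + of_nat q))"
        unfolding step norm_mult ..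
      also have "\<dots> \<le> (D * 2 ^ q) * 2"
        by (intro mult_mono Suc.IH ratio) (auto simp: D0)
      finally show ?thesis by simp
    qed
  qed
  with D0 show ?thesis by blast
qed

lemma exp_has_sum_real:
  assumes "x \<ge> 0"
  shows "((\<lambda>n. (x::real) ^ n / fact n) has_sum exp x) UNIV"
proof (rule sums_nonneg_imp_has_sum)
  show "(\<lambda>n. x ^ n / fact n) sums exp x"
    using exp_converges[of x] by (simp add: divide_inverse mult.commute)
  show "\<And>n. x ^ n / fact n \<ge> 0" using assms by simp
qed

lemma exp_summable_real: "summable (\<lambda>n. (x::real) ^ n / fact n)"
  using exp_converges[of x] by (simp add: divide_inverse mult.commute sums_iff)

lemma inv_fact_sum: "(\<Sum>i\<le>n. 1 / (fact i * fact (n - i)) :: real) = 2 ^ n / fact n"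
proof -
  have "(\<Sum>i\<le>n. 1 / (fact i * fact (n - i)) :: real) = (\<Sum>i\<le>n. real (n choose i) / fact n)"
  proof (rule sum.cong)
    fix i assume "i \<in> {..n}"
    then have "real (n choose i) = fact n / (fact i * fact (n - i))" by (intro binomial_fact) auto
    then show "1 / (fact i * fact (n - i)) = real (n choose i) / (fact n :: real)" by simp
  qed simp
  also have "\<dots> = real (\<Sum>i\<le>n. n choose i) / fact n" by (simp add: sum_divide_distrib)
  also have "\<dots> = 2 ^ n / fact n" by (simp add: choose_row_sum)
  finally show ?thesis .
qed

lemma norm_aa: "norm (aa k L j) = (norm k / 2) ^ (2*j + 2*L) / (fact j * fact (j + 2*L))"
  unfolding aa_def by (simp add: norm_mult norm_divide norm_power)

lemma norm_bb: "norm (bb k \<mu> L m) = (norm k / 2) ^ (2*m + 2*L) * norm (PP \<mu> (L + m)) / (fact m * fact (m + 2*L))"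
  unfolding bb_def by (simp add: norm_mult norm_divide norm_power)

lemma aa_le: "norm (aa k L j) \<le> (norm k / 2) ^ (2*j + 2*L) / (fact j * fact L)"
proof -
  have "fact j * fact L \<le> (fact j * fact (j + 2*L) :: real)"
    by (intro mult_left_mono) (auto intro: fact_mono)
  moreover have "(0::real) < fact j * fact L" by simp
  ultimately show ?thesis unfolding norm_aa
    by (intro divide_left_mono) auto
qed

lemma aa_le2: "norm (aa k L j) \<le> (norm k / 2) ^ (2*L) * ((norm k / 2)^2) ^ j / fact j"
proof -
  have "norm (aa k L j) \<le> (norm k / 2) ^ (2*j + 2*L) / (fact j * fact L)" by (rule aa_le)
  also have "\<dots> \<le> (norm k / 2) ^ (2*j + 2*L) / fact j"
    by (intro divide_left_mono) (auto simp: fact_ge_1)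
  also have "\<dots> = (norm k / 2) ^ (2*L) * ((norm k / 2)^2) ^ j / fact j"
  proof -
    have "(norm k / 2) ^ (2*j + 2*L) = (norm k / 2) ^ (2*L) * ((norm k / 2)^2) ^ j"
      by (simp add: power_add mult.commute flip: power_mult)
    then show ?thesis by simp
  qed
  finally show ?thesis .
qed

lemma bb_le:
  assumes D: "\<forall>q. norm (PP \<mu> q) \<le> D * 2 ^ q"
  shows "norm (bb k \<mu> L m) \<le> D * 2 ^ (L + m) * (norm k / 2) ^ (2*m + 2*L) / fact m"
proof -
  have D0: "D \<ge> 0" using order_trans[OF norm_ge_zero D[rule_format, of 0]] by simp
  have "norm (bb k \<mu> L m) \<le> (norm k / 2) ^ (2*m + 2*L) * (D * 2 ^ (L + m)) / (fact m * fact (m + 2*L))"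
    unfolding norm_bb by (intro divide_right_mono mult_left_mono D[rule_format]) auto
  also have "\<dots> \<le> (norm k / 2) ^ (2*m + 2*L) * (D * 2 ^ (L + m)) / fact m"
    using D0 by (intro divide_left_mono) (auto simp: fact_ge_1)
  finally show ?thesis by (simp add: mult_ac)
qed

lemma bb_le2:
  assumes D: "\<forall>q. norm (PP \<mu> q) \<le> D * 2 ^ q"
  shows "norm (bb k \<mu> L m) \<le> D * 2 ^ L * (norm k / 2) ^ (2*L) * (2 * (norm k / 2)^2) ^ m / fact m"
proof -
  have e: "(norm k / 2) ^ (2*m + 2*L) = (norm k / 2) ^ (2*L) * ((norm k / 2)^2) ^ m"
    by (simp add: power_add mult.commute flip: power_mult)
  have e2: "(2::real) ^ (L + m) = 2 ^ L * 2 ^ m" by (simp add: power_add)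
  show ?thesis using bb_le[OF D, of k L m] unfolding e e2 by (simp add: power_mult_distrib mult_ac)
qed

lemma summable_norm_aa: "summable (\<lambda>j. norm (aa k L j))"
proof (rule summable_comparison_test[OF _ summable_mult[OF exp_summable_real]])
  show "\<exists>N. \<forall>n\<ge>N. norm (norm (aa k L n)) \<le> (norm k / 2) ^ (2*L) * (((norm k / 2)^2) ^ n / fact n)"
    using aa_le2[of k L] by (auto simp: mult_ac)
qed

lemma summable_norm_bb:
  assumes D: "\<forall>q. norm (PP \<mu> q) \<le> D * 2 ^ q"
  shows "summable (\<lambda>m. norm (bb k \<mu> L m))"
proof (rule summable_comparison_test[OF _ summable_mult[OF exp_summable_real]])
  show "\<exists>N. \<forall>n\<ge>N. norm (norm (bb k \<mu> L n)) \<le> (D * 2 ^ L * (norm k / 2) ^ (2*L)) * ((2 * (norm k / 2)^2) ^ n / fact n)"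
    using bb_le2[OF D, of k L] by (auto simp: mult_ac)
qed

lemma ab_le:
  assumes D: "\<forall>q. norm (PP \<mu> q) \<le> D * 2 ^ q" and i: "i \<le> n"
  shows "norm (aa k L i * bb k \<mu> L (n - i)) \<le>
         D * 2 ^ (L + n) * (norm k / 2) ^ (2*n + 4*L) / (fact L * (fact i * fact (n - i)))"
proof -
  define r where "r = norm k / 2"
  have r0: "r \<ge> 0" unfolding r_def by simp
  have D0: "D \<ge> 0" using order_trans[OF norm_ge_zero D[rule_format, of 0]] by simp
  have "norm (aa k L i * bb k \<mu> L (n - i)) = norm (aa k L i) * norm (bb k \<mu> L (n - i))"
    by (rule norm_mult)
  also have "\<dots> \<le> (r ^ (2*i + 2*L) / (fact i * fact L)) * (D * 2 ^ (L + (n - i)) * r ^ (2*(n-i) + 2*L) / fact (n - i))"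
    unfolding r_def by (intro mult_mono aa_le bb_le[OF D]) auto
  also have "\<dots> \<le> (r ^ (2*i + 2*L) / (fact i * fact L)) * (D * 2 ^ (L + n) * r ^ (2*(n-i) + 2*L) / fact (n - i))"
    using r0 D0 i by (intro mult_left_mono divide_right_mono mult_right_mono mult_left_mono power_increasing) auto
  also have "\<dots> = D * 2 ^ (L + n) * (r ^ (2*i + 2*L) * r ^ (2*(n-i) + 2*L)) / (fact L * (fact i * fact (n - i)))"
    by (simp add: field_simps)
  also have "r ^ (2*i + 2*L) * r ^ (2*(n-i) + 2*L) = r ^ (2*n + 4*L)"
    using i by (simp add: power_add[symmetric]) (simp add: algebra_simps)
  finally show ?thesis unfolding r_def .
qed

lemma four_eq: "(4::real) ^ n = 2 ^ n * 2 ^ n"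
  by (simp add: power_mult_distrib[symmetric])

lemma cc_le:
  assumes D: "\<forall>q. norm (PP \<mu> q) \<le> D * 2 ^ q"
  shows "norm (cc k \<mu> L n) \<le> D * (2 * (norm k / 2)^4) ^ L / fact L * ((4 * (norm k / 2)^2) ^ n / fact n)"
proof -
  define r where "r = norm k / 2"
  have "norm (cc k \<mu> L n) \<le> (\<Sum>i\<le>n. norm (aa k L i * bb k \<mu> L (n - i)))"
    unfolding cc_def by (rule norm_sum)
  also have "\<dots> \<le> (\<Sum>i\<le>n. D * 2 ^ (L + n) * r ^ (2*n + 4*L) / fact L * (1 / (fact i * fact (n - i))))"
    by (rule sum_mono) (use ab_le[OF D] in \<open>simp add: r_def\<close>)
  also have "\<dots> = D * 2 ^ (L + n) * r ^ (2*n + 4*L) / fact L * (2 ^ n / fact n)"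
    by (subst sum_distrib_left[symmetric]) (simp only: inv_fact_sum)
  also have "\<dots> = D * (2 * r^4) ^ L / fact L * ((4 * r^2) ^ n / fact n)"
    using four_eq[of n] by (simp add: power_add power_mult_distrib power_mult field_simps)
       (simp add: power_mult[symmetric] mult.commute)
  finally show ?thesis unfolding r_def .
qed

definition b0 :: "complex \<Rightarrow> complex \<Rightarrow> nat \<Rightarrow> nat \<Rightarrow> complex" where
  "b0 k \<mu> L m = (-1) ^ m * (k / 2) ^ (2*m) * PP \<mu> (L + m) / (fact m * fact (m + 2*L))"

definition hterm :: "complex \<Rightarrow> complex \<Rightarrow> nat \<Rightarrow> nat \<Rightarrow> complex" where
  "hterm k \<mu> L m = (prod_list (map (\<lambda>a. pochhammer a m) [of_nat L + 1/2]) /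
      prod_list (map (\<lambda>b. pochhammer b m) [of_nat (2 * L) + 1, of_nat L + \<mu> + 1])) * (- (k ^ 2 / 4)) ^ m / fact m"

definition Cp :: "complex \<Rightarrow> nat \<Rightarrow> complex" where
  "Cp \<mu> L = complex_of_real (sqrt pi) * Gamma (\<mu> + 1) *
            ((-1) ^ (2 * L) * 2 powi (- (6 * int L)) * Gamma (of_nat (2 * L) + 1)
               * (2 - (if L = 0 then 1 else 0))
             / ((fact L) ^ 2 * Gamma (of_nat L + 1/2) * Gamma (of_nat L + \<mu> + 1)))"

lemma bb_b0: "bb k \<mu> L m = (k/2) ^ (2*L) * b0 k \<mu> L m"
  unfolding bb_def b0_def by (simp add: power_add field_simps)

lemma half_nz: "pochhammer (1/2::complex) n \<noteq> 0"
proof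
  assume "pochhammer (1/2::complex) n = 0"
  then obtain k where eq: "(1/2::complex) = - of_nat k" by (auto simp: pochhammer_eq_0_iff)
  have "Re (1/2::complex) = Re (- of_nat k)" using eq by (rule arg_cong)
  then have "(1/2::real) = - real k" by simp
  then show False by linarith
qed

lemma half_notin: "(1/2::complex) \<notin> \<int>\<^sub>\<le>\<^sub>0"
proof
  assume "(1/2::complex) \<in> \<int>\<^sub>\<le>\<^sub>0"
  then obtain n where "(1/2::complex) = - of_nat n" by (auto elim!: nonpos_Ints_cases')
  then have "Re (1/2::complex) = Re (- of_nat n)" by (rule arg_cong)
  then have "(1/2::real) = - real n" by simp
  then show False by linarith
qed

lemma Cp_eq:
  fixes \<mu> :: complex
  assumes a2: "\<mu> + 1 \<notin> \<int>\<^sub>\<le>\<^sub>0"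
  shows "Cp \<mu> L = eps L * fact (2*L) / (64 ^ L * fact L ^ 2 * pochhammer (1/2) L * pochhammer (\<mu>+1) L)"
proof -
  have g1: "Gamma (of_nat (2 * L) + 1 :: complex) = fact (2*L)"
    using Gamma_fact[of "2*L"] by (simp add: add.commute)
  have g2: "Gamma (of_nat L + 1/2 :: complex) = pochhammer (1/2) L * of_real (sqrt pi)"
    using pochhammer_Gamma[OF half_notin, of L] Gamma_one_half_complex
    by (simp add: add.commute field_simps)
  have Gnz: "Gamma (\<mu> + 1) \<noteq> 0" using a2 by (simp add: Gamma_eq_zero_iff)
  have g3: "Gamma (of_nat L + \<mu> + 1) = pochhammer (\<mu> + 1) L * Gamma (\<mu> + 1)"
    using pochhammer_Gamma[OF a2, of L] Gnz by (simp add: field_simps add_ac)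
  have g4: "(2::complex) powi (- (6 * int L)) = 1 / 64 ^ L"
  proof -
    have e: "6 * int L = int (6 * L)" by simp
    have "(2::complex) powi (- (6 * int L)) = inverse (2 ^ (6 * L))"
      unfolding e power_int_minus power_int_of_nat ..
    also have "(2::complex) ^ (6 * L) = 64 ^ L" by (simp add: power_mult)
    finally show ?thesis by (simp add: divide_inverse)
  qed
  have pi0: "complex_of_real (sqrt pi) \<noteq> 0" by simp
  have nz2: "pochhammer (\<mu>+1) L \<noteq> 0" by (rule pochhammer_nz[OF a2])
  show ?thesis unfolding Cp_def g1 g2 g3 g4 using Gnz pi0 nz2 half_nz[of L]
    by (simp add: eps_def field_simps)
qed

lemma Cp_nz:
  assumes a2: "\<mu> + 1 \<notin> \<int>\<^sub>\<le>\<^sub>0"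
  shows "Cp \<mu> L \<noteq> 0"
  unfolding Cp_eq[OF a2] using half_nz[of L] pochhammer_nz[OF a2, of L]
  by (simp add: eps_def)

lemma Cp_hterm:
  fixes \<mu> :: complex
  assumes a2: "\<mu> + 1 \<notin> \<int>\<^sub>\<le>\<^sub>0"
  shows "Cp \<mu> L * hterm k \<mu> L m = eps L / 4 ^ L * b0 k \<mu> L m"
proof -
  have h1: "pochhammer (of_nat (2*L) + 1 :: complex) m = fact (m + 2*L) / fact (2*L)"
  proof -
    have "pochhammer (1::complex) (2*L + m) = pochhammer 1 (2*L) * pochhammer (1 + of_nat (2*L)) m"
      by (rule pochhammer_product')
    then show ?thesis by (simp add: pochhammer_fact[symmetric] add.commute field_simps)
  qed
  have h2: "pochhammer (of_nat L + 1/2 :: complex) m = pochhammer (1/2) (L+m) / pochhammer (1/2) L"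
    using pochhammer_product'[of "1/2::complex" L m] half_nz[of L] by (simp add: field_simps add.commute)
  have h3: "pochhammer (of_nat L + \<mu> + 1) m = pochhammer (\<mu>+1) (L+m) / pochhammer (\<mu>+1) L"
    using pochhammer_product'[of "\<mu>+1" L m] pochhammer_nz[OF a2, of L] by (simp add: field_simps add_ac)
  have h4: "fact (2*L) = (4::complex) ^ L * pochhammer (1/2) L * fact L"
    using fact_double[of L, where 'a=complex] by (simp add: power_mult)
  have h5: "(- (k^2/4)) ^ m = (-1) ^ m * (k/2) ^ (2*m)"
    by (simp add: power_minus[of "k^2/4"] power_mult power_divide)
  have h6: "(64::complex) ^ L = 4 ^ L * 4 ^ L * 4 ^ L"
    by (simp add: power_mult_distrib[symmetric])
  have nzQ: "pochhammer (\<mu>+1) (L+m) \<noteq> 0" by (rule pochhammer_nz[OF a2])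
  have nzq: "pochhammer (\<mu>+1) L \<noteq> 0" by (rule pochhammer_nz[OF a2])
  have nzp: "pochhammer (1/2::complex) L \<noteq> 0" by (rule half_nz)
  have nzP: "pochhammer (1/2::complex) (L+m) \<noteq> 0" by (rule half_nz)
  have nzf: "(fact (m + 2*L) :: complex) \<noteq> 0" by simp
  show ?thesis
    unfolding Cp_eq[OF a2] hterm_def b0_def PP_def
    apply (simp only: prod_list.Cons prod_list.Nil list.map mult_1_right h1 h2 h3 h5)
    unfolding h4 h6 using nzQ nzq nzp nzP nzf
    by (simp add: field_simps power2_eq_square)
qed

lemma b0_le:
  assumes D: "\<forall>q. norm (PP \<mu> q) \<le> D * 2 ^ q"
  shows "norm (b0 k \<mu> L m) \<le> (D * 2 ^ L) * ((2 * (norm k / 2)^2) ^ m / fact m)"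
proof -
  have D0: "D \<ge> 0" using order_trans[OF norm_ge_zero D[rule_format, of 0]] by simp
  have "norm (b0 k \<mu> L m) = (norm k / 2) ^ (2*m) * norm (PP \<mu> (L + m)) / (fact m * fact (m + 2*L))"
    unfolding b0_def by (simp add: norm_mult norm_divide norm_power)
  also have "\<dots> \<le> (norm k / 2) ^ (2*m) * (D * 2 ^ (L + m)) / (fact m * fact (m + 2*L))"
    by (intro divide_right_mono mult_left_mono D[rule_format]) auto
  also have "\<dots> \<le> (norm k / 2) ^ (2*m) * (D * 2 ^ (L + m)) / fact m"
    using D0 by (intro divide_left_mono) (auto simp: fact_ge_1)
  also have "\<dots> = (D * 2 ^ L) * ((2 * (norm k / 2)^2) ^ m / fact m)"
    by (simp add: power_add power_mult_distrib mult.commute mult.left_commute flip: power_mult)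
  finally show ?thesis .
qed

lemma summable_norm_b0:
  assumes D: "\<forall>q. norm (PP \<mu> q) \<le> D * 2 ^ q"
  shows "summable (\<lambda>m. norm (b0 k \<mu> L m))"
proof (rule summable_comparison_test[OF _ summable_mult[OF exp_summable_real]])
  show "\<exists>N. \<forall>n\<ge>N. norm (norm (b0 k \<mu> L n)) \<le> (D * 2 ^ L) * ((2 * (norm k / 2)^2) ^ n / fact n)"
    using b0_le[OF D, of k L] by auto
qed

lemma ST_eq:
  fixes k \<mu> :: complex
  assumes a2: "\<mu> + 1 \<notin> \<int>\<^sub>\<le>\<^sub>0" and D: "\<forall>q. norm (PP \<mu> q) \<le> D * 2 ^ q"
  shows "k ^ (2*L) * Cp \<mu> L * besselJ (2*L) k *
           hyperF [of_nat L + 1/2] [of_nat (2 * L) + 1, of_nat L + \<mu> + 1] (- (k ^ 2 / 4))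
         = eps L * (besselJ (2*L) k * suminf (bb k \<mu> L))"
proof -
  have hF: "hyperF [of_nat L + 1/2] [of_nat (2 * L) + 1, of_nat L + \<mu> + 1] (- (k ^ 2 / 4)) = suminf (hterm k \<mu> L)"
    unfolding hyperF_def hterm_def ..
  have sb0: "summable (b0 k \<mu> L)"
    by (rule summable_norm_cancel[OF summable_norm_b0[OF D]])
  define c where "c = eps L / 4 ^ L / Cp \<mu> L"
  have cnz: "Cp \<mu> L \<noteq> 0" by (rule Cp_nz[OF a2])
  have ht: "hterm k \<mu> L = (\<lambda>m. c * b0 k \<mu> L m)"
  proof
    fix m
    have "Cp \<mu> L * hterm k \<mu> L m = eps L / 4 ^ L * b0 k \<mu> L m" by (rule Cp_hterm[OF a2])
    then show "hterm k \<mu> L m = c * b0 k \<mu> L m" unfolding c_def using cnz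
      by (simp add: field_simps)
  qed
  have s1: "suminf (hterm k \<mu> L) = c * suminf (b0 k \<mu> L)"
    unfolding ht by (rule suminf_mult[OF sb0])
  have s2: "suminf (bb k \<mu> L) = (k/2) ^ (2*L) * suminf (b0 k \<mu> L)"
    unfolding bb_b0 by (rule suminf_mult[OF sb0])
  have kk: "k ^ (2*L) = 4 ^ L * (k/2) ^ (2*L)"
    by (simp add: power_divide power_mult)
  show ?thesis unfolding hF s1 s2 c_def kk using cnz by (simp add: field_simps)
qed

lemma tt_le:
  assumes D: "\<forall>q. norm (PP \<mu> q) \<le> D * 2 ^ q"
  shows "norm (tt k \<mu> (L, n)) \<le> 2 * D * (2 * (norm k / 2)^4) ^ L / fact L * ((4 * (norm k / 2)^2) ^ n / fact n)"
proof -
  have e: "norm (eps L) \<le> 2" by (simp add: eps_def)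
  have "norm (tt k \<mu> (L, n)) = norm (eps L) * norm (cc k \<mu> L n)"
    by (simp add: tt_def norm_mult)
  also have "\<dots> \<le> 2 * (D * (2 * (norm k / 2)^4) ^ L / fact L * ((4 * (norm k / 2)^2) ^ n / fact n))"
    by (intro mult_mono e cc_le[OF D]) auto
  finally show ?thesis by simp
qed

theorem main_aux:
  fixes k \<mu> :: complex
  assumes a1: "\<mu> + 1/2 \<notin> \<int>\<^sub>\<le>\<^sub>0" and a2: "\<mu> + 1 \<notin> \<int>\<^sub>\<le>\<^sub>0"
  shows "(\<lambda>L. eps L * (besselJ (2*L) k * suminf (bb k \<mu> L))) sums
         hyperF [\<mu>/2 + 1/4, \<mu>/2 + 3/4] [1, \<mu> + 1/2, \<mu> + 1] (- (k ^ 2))"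
proof -
  obtain D where D0: "D \<ge> 0" and D: "\<forall>q. norm (PP \<mu> q) \<le> D * 2 ^ q"
    using PP_bound[OF a2] by blast
  define X where "X = 2 * (norm k / 2)^4"
  define Y where "Y = 4 * (norm k / 2)^2"
  have X0: "X \<ge> 0" and Y0: "Y \<ge> 0" unfolding X_def Y_def by simp_all
  define B where "B = (\<lambda>(L::nat, n::nat). 2 * D * X ^ L / fact L * (Y ^ n / fact n))"
  have Bsum: "B summable_on UNIV"
  proof -
    have "B summable_on Sigma UNIV (\<lambda>_. UNIV)"
    proof (rule summable_on_SigmaI[where g = "\<lambda>L. 2 * D * X ^ L / fact L * exp Y"])
      fix L :: nat
      show "((\<lambda>n. B (L, n)) has_sum 2 * D * X ^ L / fact L * exp Y) UNIV"
        unfolding B_def prod.case by (rule has_sum_cmult_right[OF exp_has_sum_real[OF Y0]])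
    next
      have "((\<lambda>L. 2 * D * exp Y * (X ^ L / fact L)) has_sum 2 * D * exp Y * exp X) UNIV"
        by (rule has_sum_cmult_right[OF exp_has_sum_real[OF X0]])
      then have "(\<lambda>L. 2 * D * exp Y * (X ^ L / fact L)) summable_on UNIV"
        by (rule has_sum_imp_summable)
      then show "(\<lambda>L. 2 * D * X ^ L / fact L * exp Y) summable_on UNIV"
        by (simp add: mult_ac)
    next
      fix L n show "B (L, n) \<ge> 0" unfolding B_def using D0 X0 Y0 by simp
    qed
    then show ?thesis by simp
  qed
  have tsum: "tt k \<mu> summable_on UNIV"
  proof -
    have "(\<lambda>x. norm (tt k \<mu> x)) summable_on UNIV"
    proof (rule Infinite_Sum.abs_summable_on_comparison_test'[OF Bsum])
      fix x :: "nat \<times> nat"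
      obtain L n where x: "x = (L, n)" by force
      show "norm (tt k \<mu> x) \<le> B x" unfolding x B_def X_def Y_def using tt_le[OF D] by simp
    qed
    then show ?thesis by (rule abs_summable_summable)
  qed
  define S where "S = infsum (tt k \<mu>) UNIV"
  have tS: "(tt k \<mu> has_sum S) UNIV" unfolding S_def using tsum by (rule has_sum_infsum)
  have row: "((\<lambda>n. tt k \<mu> (L, n)) has_sum eps L * (besselJ (2*L) k * suminf (bb k \<mu> L))) UNIV" for L
  proof (rule norm_summable_imp_has_sum)
    show "summable (\<lambda>n. norm (tt k \<mu> (L, n)))"
    proof (rule summable_comparison_test[OF _ summable_mult[OF exp_summable_real]])
      show "\<exists>N. \<forall>n\<ge>N. norm (norm (tt k \<mu> (L, n))) \<le> (2 * D * X ^ L / fact L) * (Y ^ n / fact n)"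
        using tt_le[OF D, of k L] unfolding X_def Y_def by auto
    qed
    have bj: "besselJ (2*L) k = suminf (aa k L)" unfolding besselJ_def aa_def ..
    have "(\<lambda>n. \<Sum>i\<le>n. aa k L i * bb k \<mu> L (n - i)) sums (suminf (aa k L) * suminf (bb k \<mu> L))"
      by (rule Cauchy_product_sums[OF summable_norm_aa summable_norm_bb[OF D]])
    then have "(\<lambda>n. eps L * cc k \<mu> L n) sums (eps L * (besselJ (2*L) k * suminf (bb k \<mu> L)))"
      unfolding bj cc_def by (rule sums_mult)
    then show "(\<lambda>n. tt k \<mu> (L, n)) sums (eps L * (besselJ (2*L) k * suminf (bb k \<mu> L)))"
      by (simp add: tt_def)
  qed
  have sum1: "((\<lambda>L. eps L * (besselJ (2*L) k * suminf (bb k \<mu> L))) has_sum S) UNIV"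
    by (rule has_sum_Sigma'[of "tt k \<mu>" UNIV "\<lambda>_. UNIV"]) (use tS row in auto)
  have tS2: "((\<lambda>(N, L). tt k \<mu> (L, N - 2*L)) has_sum S) (Sigma UNIV (\<lambda>N. {..N div 2}))"
  proof -
    have "(tt k \<mu> has_sum S) UNIV = ((\<lambda>(N, L). tt k \<mu> (L, N - 2*L)) has_sum S) (Sigma UNIV (\<lambda>N. {..N div 2}))"
      by (rule has_sum_reindex_bij_witness[where i = "\<lambda>(N, L). (L, N - 2*L)" and j = "\<lambda>(L, n). (2*L + n, L)"])
         auto
    with tS show ?thesis by simp
  qed
  have sum2: "((\<lambda>N. \<Sum>L\<le>N div 2. tt k \<mu> (L, N - 2*L)) has_sum S) UNIV"
    by (rule has_sum_Sigma'[OF tS2]) auto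
  then have "((\<lambda>N. lhsT k \<mu> N) has_sum S) UNIV"
    using finite_identity[OF a1 a2] by simp
  then have "lhsT k \<mu> sums S" by (rule has_sum_imp_sums)
  then have "hyperF [\<mu>/2 + 1/4, \<mu>/2 + 3/4] [1, \<mu> + 1/2, \<mu> + 1] (- (k ^ 2)) = S"
    unfolding hyperF_def lhsT_def by (rule sums_unique[symmetric])
  with sum1 show ?thesis by (simp add: has_sum_imp_sums)
qed

theorem mainTheorem3:
  fixes k \<mu> :: complex
  assumes "\<mu> + 1/2 \<notin> \<int>\<^sub>\<le>\<^sub>0" and "\<mu> + 1 \<notin> \<int>\<^sub>\<le>\<^sub>0"
  shows "(\<lambda>L::nat. complex_of_real (sqrt pi) * Gamma (\<mu> + 1) *
            ((-1) ^ (2 * L) * 2 powi (- (6 * int L)) * k ^ (2 * L) * Gamma (of_nat (2 * L) + 1)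
               * (2 - (if L = 0 then 1 else 0))
             / ((fact L) ^ 2 * Gamma (of_nat L + 1/2) * Gamma (of_nat L + \<mu> + 1)))
            * besselJ (2 * L) k
            * hyperF [of_nat L + 1/2] [of_nat (2 * L) + 1, of_nat L + \<mu> + 1] (- (k ^ 2 / 4)))
         sums hyperF [\<mu>/2 + 1/4, \<mu>/2 + 3/4] [1, \<mu> + 1/2, \<mu> + 1] (- (k ^ 2))"
proof -
  obtain D where D: "\<forall>q. norm (PP \<mu> q) \<le> D * 2 ^ q"
    using PP_bound[OF assms(2)] by blast
  have "(\<lambda>L::nat. complex_of_real (sqrt pi) * Gamma (\<mu> + 1) *
            ((-1) ^ (2 * L) * 2 powi (- (6 * int L)) * k ^ (2 * L) * Gamma (of_nat (2 * L) + 1)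
               * (2 - (if L = 0 then 1 else 0))
             / ((fact L) ^ 2 * Gamma (of_nat L + 1/2) * Gamma (of_nat L + \<mu> + 1)))
            * besselJ (2 * L) k
            * hyperF [of_nat L + 1/2] [of_nat (2 * L) + 1, of_nat L + \<mu> + 1] (- (k ^ 2 / 4)))
        = (\<lambda>L. eps L * (besselJ (2*L) k * suminf (bb k \<mu> L)))"
  proof
    fix L :: nat
    have "complex_of_real (sqrt pi) * Gamma (\<mu> + 1) *
            ((-1) ^ (2 * L) * 2 powi (- (6 * int L)) * k ^ (2 * L) * Gamma (of_nat (2 * L) + 1)
               * (2 - (if L = 0 then 1 else 0))
             / ((fact L) ^ 2 * Gamma (of_nat L + 1/2) * Gamma (of_nat L + \<mu> + 1)))
          = k ^ (2*L) * Cp \<mu> L"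
      unfolding Cp_def by (simp add: mult_ac)
    then show "complex_of_real (sqrt pi) * Gamma (\<mu> + 1) *
            ((-1) ^ (2 * L) * 2 powi (- (6 * int L)) * k ^ (2 * L) * Gamma (of_nat (2 * L) + 1)
               * (2 - (if L = 0 then 1 else 0))
             / ((fact L) ^ 2 * Gamma (of_nat L + 1/2) * Gamma (of_nat L + \<mu> + 1)))
            * besselJ (2 * L) k
            * hyperF [of_nat L + 1/2] [of_nat (2 * L) + 1, of_nat L + \<mu> + 1] (- (k ^ 2 / 4))
          = eps L * (besselJ (2*L) k * suminf (bb k \<mu> L))"
      using ST_eq[OF assms(2) D, of k L] by simp
  qed
  then show ?thesis using main_aux[OF assms] by simp
qed

end
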